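(* For $v\in L^2(0,l)$, the function $m(\lambda)$ is an entire function of exponential type and for all $\lambda\in\mathbb C$ $$m(\lambda)+m^*(\lambda)=\widetilde v_d(\lambda)\widetilde v_c^*(\lambda)+\widetilde v_s(\lambda)\widetilde v_s^*(\lambda)+\widetilde v_c(\lambda)\widetilde v_d^*(\lambda).$$
   Context: Let $\zeta_1=1$, $\zeta_2=-\frac12+\frac{\sqrt3}{2}i$, $\zeta_3=-\frac12-\frac{\sqrt3}{2}i$; $c(z)=\frac13\sum_k e^{z\zeta_k}$, $s(z)=\frac13\sum_k\zeta_k^{-1}e^{z\zeta_k}$, $d(z)=\frac13\sum_k\zeta_k^{-2}e^{z\zeta_k}$. Fix $0<l<\infty$ and $v\in L^2(0,l)$. For an entire function $f$ let $f^*(\lambda)=\overline{f(\overline\lambda)}$. Define $\widetilde v_c(\lambda)=\int_0^l v(x)c(-i\lambda x)\,dx$, $\widetilde v_s(\lambda)=\int_0^l v(x)s(-i\lambda x)\,dx$, $\widetilde v_d(\lambda)=\int_0^l v(x)d(-i\lambda x)\,dx$ (so e.g. $\widetilde v_c^*(\lambda)=\int_0^l\overline{v(x)}c(i\lambda x)\,dx$), and $$m(\lambda)=\int_0^l\overline{v(x)}\int_0^x d(i\lambda(x-t))v(t)\,dt\,dx.$$ *)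

theory Defs
  imports "HOL-Analysis.Analysis"
begin

definition zeta :: "nat \<Rightarrow> complex" where
  "zeta k = (if k = 1 then 1
             else if k = 2 then Complex (-1/2) (sqrt 3 / 2)
             else Complex (-1/2) (- sqrt 3 / 2))"

definition cfun :: "complex \<Rightarrow> complex" where
  "cfun z = (1/3) * (\<Sum>k\<in>{1,2,3}. exp (z * zeta k))"

definition sfun :: "complex \<Rightarrow> complex" where
  "sfun z = (1/3) * (\<Sum>k\<in>{1,2,3}. inverse (zeta k) * exp (z * zeta k))"

definition dfun :: "complex \<Rightarrow> complex" where
  "dfun z = (1/3) * (\<Sum>k\<in>{1,2,3}. inverse (zeta k ^ 2) * exp (z * zeta k))"

definition fstar :: "(complex \<Rightarrow> complex) \<Rightarrow> complex \<Rightarrow> complex" where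
  "fstar f z = cnj (f (cnj z))"

definition L2_on :: "real \<Rightarrow> (real \<Rightarrow> complex) \<Rightarrow> bool" where
  "L2_on l v \<longleftrightarrow> set_borel_measurable lborel {0..l} v \<and>
                   set_integrable lborel {0..l} (\<lambda>x. (cmod (v x))\<^sup>2)"

definition vc :: "real \<Rightarrow> (real \<Rightarrow> complex) \<Rightarrow> complex \<Rightarrow> complex" where
  "vc l v z = (LINT x:{0..l}|lborel. v x * cfun (- \<i> * z * complex_of_real x))"

definition vs :: "real \<Rightarrow> (real \<Rightarrow> complex) \<Rightarrow> complex \<Rightarrow> complex" where
  "vs l v z = (LINT x:{0..l}|lborel. v x * sfun (- \<i> * z * complex_of_real x))"

definition vd :: "real \<Rightarrow> (real \<Rightarrow> complex) \<Rightarrow> complex \<Rightarrow> complex" where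
  "vd l v z = (LINT x:{0..l}|lborel. v x * dfun (- \<i> * z * complex_of_real x))"

definition mfun :: "real \<Rightarrow> (real \<Rightarrow> complex) \<Rightarrow> complex \<Rightarrow> complex" where
  "mfun l v z = (LINT x:{0..l}|lborel. cnj (v x) *
      (LINT t:{0..x}|lborel. dfun (\<i> * z * complex_of_real (x - t)) * v t))"

definition exponential_type :: "(complex \<Rightarrow> complex) \<Rightarrow> bool" where
  "exponential_type f \<longleftrightarrow> (\<exists>A B. \<forall>z. cmod (f z) \<le> A * exp (B * cmod z))"

end

theory Submission
  imports Defs "HOL-Complex_Analysis.Complex_Analysis"
begin


definition om :: complex where "om = Complex (-1/2) (sqrt 3 / 2)"

lemma om_sq: "om^2 = Complex (-1/2) (- sqrt 3 / 2)"
  by (simp add: om_def power2_eq_square complex_eq_iff field_simps)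

lemma om_rel: "om^2 + om + 1 = 0"
  by (simp add: om_sq) (simp add: om_def complex_eq_iff)

lemma om3: "om^3 = 1"
proof -
  have "om^3 - 1 = (om - 1) * (om^2 + om + 1)" by algebra
  thus ?thesis using om_rel by simp
qed

lemma om_nz: "om \<noteq> 0" using om3 by auto

lemma zeta_vals: "zeta 1 = 1" "zeta 2 = om" "zeta 3 = om^2"
  by (simp_all add: zeta_def om_sq) (simp add: om_def)

lemma cnj_om: "cnj om = om^2" unfolding om_sq by (simp add: om_def complex_eq_iff)
lemma cnj_om2: "cnj (om^2) = om" unfolding om_sq by (simp add: om_def complex_eq_iff)
lemma norm_om: "norm om = 1" by (simp add: om_def cmod_def power2_eq_square)
lemma norm_om2: "norm (om^2) = 1" by (simp add: norm_power norm_om)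

lemma inv_om: "inverse om = om^2"
  by (rule inverse_unique) (metis om3 power2_eq_square power3_eq_cube mult.assoc)
lemma inv_om2: "inverse (om^2) = om"
  by (rule inverse_unique) (metis om3 power2_eq_square power3_eq_cube mult.commute)
lemma om4: "om^4 = om"
proof -
  have "om^4 = om^3 * om" by (simp add: power_Suc2 numeral_eq_Suc)
  thus ?thesis using om3 by simp
qed

lemma zeta1: "zeta (Suc 0) = 1" using zeta_vals(1) by simp

lemma cfun_eq: "cfun z = (exp z + exp (z * om) + exp (z * om^2)) / 3"
  by (simp add: cfun_def zeta_vals zeta1)
lemma sfun_eq: "sfun z = (exp z + om^2 * exp (z * om) + om * exp (z * om^2)) / 3"
  by (simp add: sfun_def zeta_vals zeta1 inv_om inv_om2)
lemma dfun_eq: "dfun z = (exp z + om * exp (z * om) + om^2 * exp (z * om^2)) / 3"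
proof -
  have "inverse ((om^2)^2) = om^2" using om4 inv_om by (simp flip: power_mult)
  thus ?thesis by (simp add: dfun_def zeta_vals zeta1 inv_om2)
qed

lemma addf: "dfun (a + b) = dfun a * cfun b + sfun a * sfun b + cfun a * dfun b"
proof -
  define A1 A2 A3 B1 B2 B3 where "A1 = exp a" "A2 = exp (a * om)" "A3 = exp (a * om^2)"
    "B1 = exp b" "B2 = exp (b * om)" "B3 = exp (b * om^2)"
  have e: "exp ((a+b)) = A1*B1" "exp ((a+b) * om) = A2*B2" "exp ((a+b) * om^2) = A3*B3"
    by (simp_all add: A1_A2_A3_B1_B2_B3_def distrib_right exp_add)
  have "3*(A1*B1 + om*(A2*B2) + om^2*(A3*B3)) = (A1 + om*A2 + om^2*A3)*(B1+B2+B3)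
     + (A1 + om^2*A2 + om*A3)*(B1 + om^2*B2 + om*B3) + (A1+A2+A3)*(B1 + om*B2 + om^2*B3)"
    using om_rel by algebra
  note HH = this
  have H: "(A1*B1 + om*(A2*B2) + om^2*(A3*B3)) / 3 = ((A1 + om*A2 + om^2*A3)*(B1+B2+B3)
     + (A1 + om^2*A2 + om*A3)*(B1 + om^2*B2 + om*B3) + (A1+A2+A3)*(B1 + om*B2 + om^2*B3)) / 9"
    by (subst HH[symmetric]) simp
  have q: "\<And>x y :: complex. (x/3)*(y/3) = x*y/9" by simp
  show ?thesis
    unfolding dfun_eq cfun_eq sfun_eq e A1_A2_A3_B1_B2_B3_def[symmetric] q H
    by (simp add: add_divide_distrib)
qed

lemma cnj_cfun: "cnj (cfun z) = cfun (cnj z)"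
  by (simp add: cfun_eq cnj_om cnj_om2 exp_cnj om4)
lemma cnj_sfun: "cnj (sfun z) = sfun (cnj z)"
  by (simp add: sfun_eq cnj_om cnj_om2 exp_cnj om4 algebra_simps)
lemma cnj_dfun: "cnj (dfun z) = dfun (cnj z)"
  by (simp add: dfun_eq cnj_om cnj_om2 exp_cnj om4 algebra_simps)

lemma norm_exp_le: "norm (exp (z * w)) \<le> exp (norm z)" if "norm w = 1" for z w :: complex
proof -
  have "Re (z*w) \<le> norm (z*w)" by (rule complex_Re_le_cmod)
  thus ?thesis using that by (simp add: norm_mult)
qed

lemma bnd3: "norm ((x + y + w) / 3) \<le> B" if "norm x \<le> B" "norm y \<le> B" "norm w \<le> B" for x y w :: complex and B
proof -
  have "norm (x+y+w) \<le> norm x + norm y + norm w" by (meson norm_triangle_le order.refl add_mono)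
  thus ?thesis using that by (simp add: norm_divide)
qed

lemma norm_cfun: "norm (cfun z) \<le> exp (norm z)"
  unfolding cfun_eq by (rule bnd3) (use norm_exp_le[of 1 z] norm_exp_le[OF norm_om] norm_exp_le[OF norm_om2] in auto)
lemma norm_sfun: "norm (sfun z) \<le> exp (norm z)"
  unfolding sfun_eq by (rule bnd3) (use norm_exp_le[of 1 z] norm_exp_le[OF norm_om] norm_exp_le[OF norm_om2] in \<open>auto simp: norm_mult norm_om norm_om2\<close>)
lemma norm_dfun: "norm (dfun z) \<le> exp (norm z)"
  unfolding dfun_eq by (rule bnd3) (use norm_exp_le[of 1 z] norm_exp_le[OF norm_om] norm_exp_le[OF norm_om2] in \<open>auto simp: norm_mult norm_om norm_om2\<close>)

lemma holo_dfun: "dfun holomorphic_on UNIV"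
  unfolding dfun_eq by (intro holomorphic_intros) auto
lemma cont_cfun: "continuous_on UNIV cfun" unfolding cfun_eq by (intro continuous_intros) auto
lemma cont_sfun: "continuous_on UNIV sfun" unfolding sfun_eq by (intro continuous_intros) auto
lemma cont_dfun: "continuous_on UNIV dfun" unfolding dfun_eq by (intro continuous_intros) auto

lemma meas_cnj[measurable]: "cnj \<in> borel_measurable borel"
  by (rule borel_measurable_continuous_onI) (intro continuous_intros)

lemma meas_cfun[measurable]: "cfun \<in> borel_measurable borel"
  by (rule borel_measurable_continuous_onI[OF cont_cfun])
lemma meas_sfun[measurable]: "sfun \<in> borel_measurable borel"
  by (rule borel_measurable_continuous_onI[OF cont_sfun])
lemma meas_dfun[measurable]: "dfun \<in> borel_measurable borel"
  by (rule borel_measurable_continuous_onI[OF cont_dfun])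


lemma holo_param:
  fixes f :: "complex \<Rightarrow> 'a \<Rightarrow> complex" and M :: "'a measure"
  assumes hol: "\<And>t. t \<in> space M \<Longrightarrow> (\<lambda>z. f z t) holomorphic_on UNIV"
  and meas: "\<And>z. f z \<in> borel_measurable M"
  and bnd: "\<And>R. \<exists>w. integrable M w \<and> (\<forall>z t. norm z \<le> R \<longrightarrow> t \<in> space M \<longrightarrow> norm (f z t) \<le> w t)"
  shows "(\<lambda>z. integral\<^sup>L M (f z)) holomorphic_on UNIV"
  unfolding holomorphic_on_def
proof
  fix z0 :: complex assume "z0 \<in> UNIV"
  obtain w where wi: "integrable M w" and wb: "\<And>z t. norm z \<le> norm z0 + 2 \<Longrightarrow> t \<in> space M \<Longrightarrow> norm (f z t) \<le> w t"
    using bnd[of "norm z0 + 2"] by blast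
  have intf: "integrable M (f z)" if "norm z \<le> norm z0 + 2" for z
    by (rule Bochner_Integration.integrable_bound[OF wi meas]) (use wb[OF that] in \<open>auto intro!: AE_I2 intro: order_trans[OF _ abs_ge_self]\<close>)
  define D where "D t = deriv (\<lambda>z. f z t) z0" for t
  have hd: "((\<lambda>z. f z t) has_field_derivative deriv (\<lambda>z. f z t) y) (at y within S)" if "t \<in> space M" for t y S
    by (rule holomorphic_derivI[OF hol[OF that]]) auto
  have dbound: "norm (deriv (\<lambda>z. f z t) y) \<le> w t" if t: "t \<in> space M" and y: "y \<in> cball z0 1" for t y
  proof -
    have "norm ((deriv ^^ 1) (\<lambda>z. f z t) y) \<le> (fact 1) * w t / 1^1"
    proof (rule Cauchy_inequality)
      show "(\<lambda>z. f z t) holomorphic_on ball y 1" using hol[OF t] by (rule holomorphic_on_subset) auto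
      show "continuous_on (cball y 1) (\<lambda>z. f z t)"
        using holomorphic_on_imp_continuous_on[OF hol[OF t]] by (rule continuous_on_subset) auto
      fix x assume "norm (y - x) = 1"
      moreover have "norm y \<le> norm z0 + 1" using y norm_triangle_sub[of y z0]
        by (auto simp: dist_norm norm_minus_commute)
      ultimately have "norm x \<le> norm z0 + 2" using norm_triangle_sub[of x y] by (auto simp: norm_minus_commute)
      thus "norm (f x t) \<le> w t" using wb t by blast
    qed simp
    thus ?thesis by simp
  qed
  have lip: "norm (f z t - f z0 t) \<le> w t * norm (z - z0)" if t: "t \<in> space M" and z: "z \<in> cball z0 1" for t z
    by (rule field_differentiable_bound[of "cball z0 1"]) (use hd[OF t] dbound[OF t] z in auto)
  have "((\<lambda>z. integral\<^sup>L M (f z)) has_field_derivative integral\<^sup>L M D) (at z0 within ball z0 1)"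
    unfolding has_field_derivative_iff tendsto_at_iff_sequentially
  proof (intro allI impI)
    fix X assume X: "\<forall>i. X i \<in> ball z0 1 - {z0}" and Xl: "X \<longlonglongrightarrow> z0"
    define q where "q i t = (f (X i) t - f z0 t) / (X i - z0)" for i t
    have qm: "q i \<in> borel_measurable M" for i unfolding q_def using meas by measurable
    have ql: "(\<lambda>i. q i t) \<longlonglongrightarrow> D t" if t: "t \<in> space M" for t
    proof -
      have "((\<lambda>y. (f y t - f z0 t) / (y - z0)) \<longlongrightarrow> D t) (at z0 within UNIV)"
        using hd[OF t, of z0 UNIV] unfolding has_field_derivative_iff D_def .
      with X Xl show ?thesis unfolding tendsto_at_iff_sequentially q_def comp_def by auto
    qed
    have Dm: "D \<in> borel_measurable M" by (rule borel_measurable_LIMSEQ_metric[OF qm ql])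
    have qb: "AE t in M. norm (q i t) \<le> w t" for i
    proof (rule AE_I2)
      fix t assume t: "t \<in> space M"
      have "X i \<in> cball z0 1" "X i \<noteq> z0" using X by (auto simp: less_imp_le)
      thus "norm (q i t) \<le> w t" using lip[OF t, of "X i"]
        by (auto simp: q_def norm_divide divide_le_eq)
    qed
    have Xn: "norm (X i) \<le> norm z0 + 2" for i
    proof -
      have "dist z0 (X i) < 1" using X by auto
      thus ?thesis using norm_triangle_sub[of "X i" z0] by (auto simp: dist_norm norm_minus_commute)
    qed
    have eq: "(integral\<^sup>L M (f (X i)) - integral\<^sup>L M (f z0)) / (X i - z0) = integral\<^sup>L M (q i)" for i
      unfolding q_def using intf[OF Xn[of i]] intf[of z0] by simp
    show "((\<lambda>y. (integral\<^sup>L M (f y) - integral\<^sup>L M (f z0)) / (y - z0)) \<circ> X) \<longlonglongrightarrow> integral\<^sup>L M D"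
      unfolding comp_def eq
      by (rule integral_dominated_convergence[OF Dm qm wi _ qb]) (auto intro: ql)
  qed
  hence "((\<lambda>z. integral\<^sup>L M (f z)) has_field_derivative integral\<^sup>L M D) (at z0)"
    by (simp add: at_within_open[of z0 "ball z0 1"])
  thus "(\<lambda>z. integral\<^sup>L M (f z)) field_differentiable at z0 within UNIV"
    unfolding field_differentiable_def by auto
qed


locale mctx =
  fixes l :: real and v :: "real \<Rightarrow> complex"
  assumes lpos: "0 < l" and L2: "L2_on l v"
begin

definition u :: "real \<Rightarrow> complex" where "u x = indicator {0..l} x *\<^sub>R v x"

lemma u_meas[measurable]: "u \<in> borel_measurable lborel"
  using L2 unfolding L2_on_def set_borel_measurable_def u_def[abs_def] by simp

lemma u_zero: "x \<notin> {0..l} \<Longrightarrow> u x = 0" by (simp add: u_def)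

lemma u_int: "integrable lborel u"
proof -
  have i1: "integrable lborel (\<lambda>x. indicator {0..l} x :: real)"
    using lpos by (simp add: integrable_indicator_iff emeasure_lborel_Icc)
  have i2: "integrable lborel (\<lambda>x. indicator {0..l} x *\<^sub>R (cmod (v x))\<^sup>2)"
    using L2 unfolding L2_on_def set_integrable_def by simp
  have "integrable lborel (\<lambda>x. indicator {0..l} x + indicator {0..l} x *\<^sub>R (cmod (v x))\<^sup>2 :: real)"
    using i1 i2 by simp
  thus ?thesis
  proof (rule Bochner_Integration.integrable_bound)
    show "u \<in> borel_measurable lborel" by simp
    show "AE x in lborel. norm (u x) \<le> norm (indicator {0..l} x + indicator {0..l} x *\<^sub>R (cmod (v x))\<^sup>2 :: real)"
    proof (rule AE_I2)
      fix x
      have "0 \<le> (cmod (v x) - 1)\<^sup>2" by simp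
      hence "2 * cmod (v x) \<le> 1 + (cmod (v x))\<^sup>2" by (simp add: power2_diff)
      hence "cmod (v x) \<le> 1 + (cmod (v x))\<^sup>2" using norm_ge_zero[of "v x"] by linarith
      thus "norm (u x) \<le> norm (indicator {0..l} x + indicator {0..l} x *\<^sub>R (cmod (v x))\<^sup>2 :: real)"
        by (auto simp: u_def indicator_def)
    qed
  qed
qed

lemma intg_u:
  assumes "g \<in> borel_measurable lborel" "\<And>t. t \<in> {0..l} \<Longrightarrow> norm (g t) \<le> C"
  shows "integrable lborel (\<lambda>t. u t * g t)" "integrable lborel (\<lambda>t. cnj (u t) * g t)"
proof -
  have "integrable lborel (\<lambda>t. norm (u t) * C)" using u_int by simp
  moreover have b: "norm (u t * g t) \<le> norm (norm (u t) * C)" "norm (cnj (u t) * g t) \<le> norm (norm (u t) * C)" for t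
  proof -
    have "norm (u t) * norm (g t) \<le> norm (u t) * C"
      by (cases "t \<in> {0..l}") (auto simp: u_zero intro!: mult_left_mono assms(2))
    thus "norm (u t * g t) \<le> norm (norm (u t) * C)" "norm (cnj (u t) * g t) \<le> norm (norm (u t) * C)"
      by (auto simp: norm_mult)
  qed
  note ib = Bochner_Integration.integrable_bound[where f="\<lambda>t. norm (u t) * C", OF calculation]
  show "integrable lborel (\<lambda>t. u t * g t)"
    by (rule ib) (use assms(1) b in auto)
  note assms(1)[measurable]
  have m: "(\<lambda>t. cnj (u t) * g t) \<in> borel_measurable lborel" by measurable
  show "integrable lborel (\<lambda>t. cnj (u t) * g t)"
    by (rule ib) (use m b in auto)
qed


definition K :: "complex \<Rightarrow> real \<Rightarrow> real \<Rightarrow> complex" where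
  "K z x t = (if t \<le> x then 1 else 0) * dfun (\<i> * z * complex_of_real (x - t))"
definition H :: "complex \<Rightarrow> real \<Rightarrow> complex" where
  "H z x = (\<integral>t. u t * K z x t \<partial>lborel)"
definition V :: real where "V = (\<integral>x. norm (u x) \<partial>lborel)"

lemma V_nn: "0 \<le> V" unfolding V_def by simp

lemma K_meas2[measurable]: "(\<lambda>(x,t). K z x t) \<in> borel_measurable (lborel \<Otimes>\<^sub>M lborel)"
  unfolding K_def by measurable

lemma K_meas[measurable]: "K z x \<in> borel_measurable lborel"
  unfolding K_def by measurable

lemma norm_lin: "norm (\<i> * z * complex_of_real r) = norm z * \<bar>r\<bar>"
  by (simp add: norm_mult)

lemma dfun_lin_bound: "norm (dfun (\<i> * z * complex_of_real r)) \<le> exp (norm z * \<bar>r\<bar>)"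
  using norm_dfun[of "\<i> * z * complex_of_real r"] by (simp add: norm_mult)

lemma K_bound: "x \<in> {0..l} \<Longrightarrow> t \<in> {0..l} \<Longrightarrow> norm (K z x t) \<le> exp (l * norm z)"
proof -
  assume x: "x \<in> {0..l}" and t: "t \<in> {0..l}"
  show ?thesis
  proof (cases "t \<le> x")
    case True
    have "norm z * \<bar>x - t\<bar> \<le> norm z * l" using x t True by (intro mult_left_mono) auto
    thus ?thesis using True dfun_lin_bound[of z "x - t"] by (auto simp: K_def mult.commute intro: order_trans)
  qed (auto simp: K_def)
qed

lemma K_bound_gen: "t \<in> {0..l} \<Longrightarrow> norm z \<le> R \<Longrightarrow> norm (K z x t) \<le> exp (R * (\<bar>x\<bar> + l))"
proof -
  assume t: "t \<in> {0..l}" and R: "norm z \<le> R"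
  have "norm z * \<bar>x - t\<bar> \<le> R * (\<bar>x\<bar> + l)"
  proof (rule mult_mono)
    show "0 \<le> R" using R norm_ge_zero[of z] by linarith
  qed (use t R in auto)
  hence "norm (dfun (\<i> * z * complex_of_real (x - t))) \<le> exp (R * (\<bar>x\<bar> + l))"
    using dfun_lin_bound[of z "x - t"] by (meson exp_le_cancel_iff order_trans)
  thus ?thesis by (auto simp: K_def)
qed

lemma H_hol: "(\<lambda>z. H z x) holomorphic_on UNIV"
  unfolding H_def
proof (rule holo_param)
  fix t :: real
  show "(\<lambda>z. u t * K z x t) holomorphic_on UNIV"
    unfolding K_def dfun_eq by (intro holomorphic_intros) auto
next
  fix z show "(\<lambda>t. u t * K z x t) \<in> borel_measurable lborel" by measurable
next
  fix R :: real
  show "\<exists>w. integrable lborel w \<and> (\<forall>z t. norm z \<le> R \<longrightarrow> t \<in> space lborel \<longrightarrow> norm (u t * K z x t) \<le> w t)"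
  proof (intro exI conjI allI impI)
    show "integrable lborel (\<lambda>t. norm (u t) * exp (R * (\<bar>x\<bar> + l)))" using u_int by simp
    fix z :: complex and t :: real assume "norm z \<le> R"
    thus "norm (u t * K z x t) \<le> norm (u t) * exp (R * (\<bar>x\<bar> + l))"
      using K_bound_gen[of t z R x] by (cases "t \<in> {0..l}") (auto simp: u_zero norm_mult intro!: mult_left_mono)
  qed
qed

lemma intK: "x \<in> {0..l} \<Longrightarrow> integrable lborel (\<lambda>t. u t * K z x t)"
  by (rule intg_u(1)[OF K_meas K_bound])

lemma H_bound: "x \<in> {0..l} \<Longrightarrow> norm (H z x) \<le> V * exp (l * norm z)"
proof -
  assume x: "x \<in> {0..l}"
  have "norm (H z x) \<le> (\<integral>t. norm (u t) * exp (l * norm z) \<partial>lborel)"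
    unfolding H_def
  proof (rule Bochner_Integration.integral_norm_bound_integral)
    show "integrable lborel (\<lambda>t. u t * K z x t)" by (rule intK[OF x])
    show "integrable lborel (\<lambda>t. norm (u t) * exp (l * norm z))" using u_int by simp
    fix t show "norm (u t * K z x t) \<le> norm (u t) * exp (l * norm z)"
      using K_bound[OF x, of t z] by (cases "t \<in> {0..l}") (auto simp: u_zero norm_mult intro!: mult_left_mono)
  qed
  thus ?thesis by (simp add: V_def)
qed

lemma H_meas[measurable]: "H z \<in> borel_measurable lborel"
proof -
  have "(\<lambda>(x, t). u t * K z x t) \<in> borel_measurable (lborel \<Otimes>\<^sub>M lborel)"
    using K_meas2[of z] by measurable
  hence "(\<lambda>x. \<integral>t. u t * K z x t \<partial>lborel) \<in> borel_measurable lborel"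
    by (rule lborel.borel_measurable_lebesgue_integral[where f="\<lambda>x t. u t * K z x t"])
  thus ?thesis unfolding H_def[abs_def] .
qed


lemma m_eq: "mfun l v z = (\<integral>x. cnj (u x) * H z x \<partial>lborel)"
  unfolding mfun_def set_lebesgue_integral_def
proof (rule Bochner_Integration.integral_cong[OF refl])
  fix x :: real
  show "indicator {0..l} x *\<^sub>R (cnj (v x) * (\<integral>t. indicator {0..x} t *\<^sub>R (dfun (\<i> * z * complex_of_real (x - t)) * v t) \<partial>lborel))
        = cnj (u x) * H z x"
  proof (cases "x \<in> {0..l}")
    case True
    have "(\<lambda>t. indicator {0..x} t *\<^sub>R (dfun (\<i> * z * complex_of_real (x - t)) * v t)) = (\<lambda>t. u t * K z x t)"
      using True by (auto simp: u_def K_def indicator_def fun_eq_iff)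
    thus ?thesis using True by (simp add: H_def u_def)
  qed (simp add: u_zero)
qed

lemma intH: "integrable lborel (\<lambda>x. cnj (u x) * H z x)"
  by (rule intg_u(2)[OF H_meas H_bound])

lemma m_hol: "mfun l v holomorphic_on UNIV"
proof -
  have "(\<lambda>z. \<integral>x. cnj (u x) * H z x \<partial>lborel) holomorphic_on UNIV"
  proof (rule holo_param)
    fix x :: real
    show "(\<lambda>z. cnj (u x) * H z x) holomorphic_on UNIV"
      by (rule holomorphic_on_mult[OF holomorphic_on_const H_hol])
  next
    fix z show "(\<lambda>x. cnj (u x) * H z x) \<in> borel_measurable lborel" by measurable
  next
    fix R :: real
    show "\<exists>w. integrable lborel w \<and> (\<forall>z x. norm z \<le> R \<longrightarrow> x \<in> space lborel \<longrightarrow> norm (cnj (u x) * H z x) \<le> w x)"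
    proof (intro exI conjI allI impI)
      show "integrable lborel (\<lambda>x. norm (u x) * (V * exp (l * R)))" using u_int by simp
      fix z :: complex and x :: real assume R: "norm z \<le> R"
      show "norm (cnj (u x) * H z x) \<le> norm (u x) * (V * exp (l * R))"
      proof (cases "x \<in> {0..l}")
        case True
        have "V * exp (l * norm z) \<le> V * exp (l * R)"
          using R lpos V_nn by (intro mult_left_mono) auto
        with H_bound[OF True, of z] show ?thesis
          by (auto simp: norm_mult intro!: mult_left_mono)
      qed (simp add: u_zero)
    qed
  qed
  thus ?thesis by (simp add: m_eq[abs_def])
qed

lemma m_exp: "exponential_type (mfun l v)"
  unfolding exponential_type_def
proof (intro exI allI)
  fix z
  have "norm (mfun l v z) \<le> (\<integral>x. norm (u x) * (V * exp (l * norm z)) \<partial>lborel)"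
    unfolding m_eq
  proof (rule Bochner_Integration.integral_norm_bound_integral)
    show "integrable lborel (\<lambda>x. cnj (u x) * H z x)" by (rule intH)
    show "integrable lborel (\<lambda>x. norm (u x) * (V * exp (l * norm z)))" using u_int by simp
    fix x show "norm (cnj (u x) * H z x) \<le> norm (u x) * (V * exp (l * norm z))"
      using H_bound[of x z] by (cases "x \<in> {0..l}") (auto simp: u_zero norm_mult intro!: mult_left_mono)
  qed
  also have "\<dots> = V * V * exp (l * norm z)" by (simp add: V_def)
  finally show "norm (mfun l v z) \<le> V * V * exp (l * norm z)" .
qed


definition P :: "complex \<Rightarrow> real \<Rightarrow> real \<Rightarrow> complex" where
  "P z x t = cnj (u x) * u t * dfun (\<i> * z * complex_of_real (x - t))"

lemma P_bound: "norm (P z x t) \<le> norm (u x) * norm (u t) * exp (l * norm z)"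
proof (cases "x \<in> {0..l} \<and> t \<in> {0..l}")
  case True
  have "norm z * \<bar>x - t\<bar> \<le> norm z * l" using True by (intro mult_left_mono) auto
  hence "norm (dfun (\<i> * z * complex_of_real (x - t))) \<le> exp (l * norm z)"
    using dfun_lin_bound[of z "x - t"] by (simp add: mult.commute) (meson exp_le_cancel_iff order_trans)
  thus ?thesis by (auto simp: P_def norm_mult intro!: mult_left_mono)
qed (auto simp: P_def u_zero)

lemma ind_le: "norm ((if b then 1 else 0) * (c::complex)) \<le> norm c" by auto

lemma inner_int:
  fixes g :: "real \<Rightarrow> complex"
  assumes "g \<in> borel_measurable lborel" "\<And>t. norm (g t) \<le> norm (u x) * norm (u t) * C"
  shows "integrable lborel g"
proof -
  have i: "integrable lborel (\<lambda>t. norm (u x) * C * norm (u t))" using u_int by simp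
  have b: "AE t in lborel. norm (g t) \<le> norm (norm (u x) * C * norm (u t))"
    using assms(2) by (auto intro!: AE_I2 simp: mult_ac intro: order_trans[OF _ abs_ge_self])
  show ?thesis by (rule Bochner_Integration.integrable_bound[OF i assms(1) b])
qed

lemma prod_int:
  fixes F :: "real \<Rightarrow> real \<Rightarrow> complex"
  assumes m: "(\<lambda>(x,t). F x t) \<in> borel_measurable (lborel \<Otimes>\<^sub>M lborel)"
    and bd: "\<And>x t. norm (F x t) \<le> norm (u x) * norm (u t) * C" and C: "0 \<le> C"
  shows "integrable (lborel \<Otimes>\<^sub>M lborel) (\<lambda>(x,t). F x t)"
proof -
  have i: "integrable (lborel \<Otimes>\<^sub>M lborel) (\<lambda>(x,t). norm (u x) * norm (u t) * C)"
  proof (rule lborel_pair.Fubini_integrable)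
    show "(\<lambda>(x,t). norm (u x) * norm (u t) * C) \<in> borel_measurable (lborel \<Otimes>\<^sub>M lborel)" by measurable
    have "(\<lambda>x. \<integral>y. norm (case (x, y) of (x, t) \<Rightarrow> norm (u x) * norm (u t) * C) \<partial>lborel)
        = (\<lambda>x. norm (u x) * (C * V))"
      using C by (simp add: V_def abs_mult mult_ac)
    thus "integrable lborel (\<lambda>x. \<integral>y. norm (case (x, y) of (x, t) \<Rightarrow> norm (u x) * norm (u t) * C) \<partial>lborel)"
      using u_int by simp
    show "AE x in lborel. integrable lborel (\<lambda>y. case (x, y) of (x, t) \<Rightarrow> norm (u x) * norm (u t) * C)"
      using u_int by (simp add: mult_ac)
  qed
  have b: "AE p in lborel \<Otimes>\<^sub>M lborel. norm ((\<lambda>(x,t). F x t) p) \<le> norm ((\<lambda>(x,t). norm (u x) * norm (u t) * C) p)"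
    using bd C by (auto intro!: AE_I2 intro: order_trans[OF _ abs_ge_self])
  show ?thesis by (rule Bochner_Integration.integrable_bound[OF i m b])
qed


lemma exp_nn: "0 \<le> exp (l * norm z)" by simp

lemma step_a: "mfun l v z = (\<integral>x. (\<integral>t. (if t \<le> x then 1 else 0) * P z x t \<partial>lborel) \<partial>lborel)"
  unfolding m_eq H_def
proof (rule Bochner_Integration.integral_cong[OF refl])
  fix x
  have "cnj (u x) * (\<integral>t. u t * K z x t \<partial>lborel) = (\<integral>t. cnj (u x) * (u t * K z x t) \<partial>lborel)" by simp
  also have "\<dots> = (\<integral>t. (if t \<le> x then 1 else 0) * P z x t \<partial>lborel)"
    by (rule Bochner_Integration.integral_cong) (simp_all add: K_def P_def mult_ac)
  finally show "cnj (u x) * (\<integral>t. u t * K z x t \<partial>lborel) = (\<integral>t. (if t \<le> x then 1 else 0) * P z x t \<partial>lborel)" .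
qed

lemma cnjK: "cnj (K (cnj z) x t) = (if t \<le> x then 1 else 0) * dfun (\<i> * z * complex_of_real (t - x))"
proof -
  have e: "cnj (\<i> * cnj z * complex_of_real (x - t)) = \<i> * z * complex_of_real (t - x)"
    by (simp add: algebra_simps)
  have "cnj (K (cnj z) x t) = (if t \<le> x then 1 else 0) * dfun (cnj (\<i> * cnj z * complex_of_real (x - t)))"
    unfolding K_def by (simp only: complex_cnj_mult cnj_dfun) simp
  thus ?thesis by (simp only: e)
qed

lemma Kcnj: "u x * cnj (u t * K (cnj z) x t) = (if t \<le> x then 1 else 0) * P z t x"
  by (simp only: complex_cnj_mult cnjK P_def) (simp add: mult_ac)

lemma step_b: "fstar (mfun l v) z = (\<integral>x. (\<integral>t. (if t \<le> x then 1 else 0) * P z t x \<partial>lborel) \<partial>lborel)"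
proof -
  have "(\<integral>x. (\<integral>t. (if t \<le> x then 1 else 0) * P z t x \<partial>lborel) \<partial>lborel)
      = (\<integral>x. cnj (cnj (u x) * H (cnj z) x) \<partial>lborel)"
  proof (rule Bochner_Integration.integral_cong[OF refl])
    fix x
    have "cnj (cnj (u x) * H (cnj z) x) = u x * cnj (\<integral>t. u t * K (cnj z) x t \<partial>lborel)"
      by (simp add: H_def)
    also have "\<dots> = u x * (\<integral>t. cnj (u t * K (cnj z) x t) \<partial>lborel)"
      by (subst Bochner_Integration.integral_cnj) (rule refl)
    also have "\<dots> = (\<integral>t. u x * cnj (u t * K (cnj z) x t) \<partial>lborel)"
      by (rule integral_mult_right_zero[symmetric])
    also have "\<dots> = (\<integral>t. (if t \<le> x then 1 else 0) * P z t x \<partial>lborel)"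
      by (simp only: Kcnj)
    finally show "(\<integral>t. (if t \<le> x then 1 else 0) * P z t x \<partial>lborel) = cnj (cnj (u x) * H (cnj z) x)" by simp
  qed
  also have "\<dots> = fstar (mfun l v) z"
    unfolding fstar_def m_eq by (rule Bochner_Integration.integral_cnj)
  finally show ?thesis by simp
qed

lemma meas_P1[measurable]: "(\<lambda>(x,t). (if t \<le> x then 1 else 0) * P z t x) \<in> borel_measurable (lborel \<Otimes>\<^sub>M lborel)"
  unfolding P_def by measurable
lemma meas_P2[measurable]: "(\<lambda>(x,t). (if t \<le> x then 1 else 0) * P z x t) \<in> borel_measurable (lborel \<Otimes>\<^sub>M lborel)"
  unfolding P_def by measurable
lemma meas_P3[measurable]: "(\<lambda>(x,t). (if x \<le> t then 1 else 0) * P z x t) \<in> borel_measurable (lborel \<Otimes>\<^sub>M lborel)"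
  unfolding P_def by measurable
lemma meas_P4[measurable]: "(\<lambda>t. (if t \<le> x then 1 else 0) * P z x t) \<in> borel_measurable lborel"
  unfolding P_def by measurable
lemma meas_P5[measurable]: "(\<lambda>t. (if x \<le> t then 1 else 0) * P z x t) \<in> borel_measurable lborel"
  unfolding P_def by measurable
lemma meas_P6[measurable]: "(\<lambda>t. P z x t) \<in> borel_measurable lborel"
  unfolding P_def by measurable

lemma step_c: "(\<integral>x. (\<integral>t. (if t \<le> x then 1 else 0) * P z t x \<partial>lborel) \<partial>lborel)
   = (\<integral>x. (\<integral>t. (if x \<le> t then 1 else 0) * P z x t \<partial>lborel) \<partial>lborel)"
proof -
  have "integrable (lborel \<Otimes>\<^sub>M lborel) (\<lambda>(x,t). (if t \<le> x then 1 else 0) * P z t x)"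
  proof (rule prod_int[OF meas_P1 _ exp_nn])
    fix x t
    have "norm ((if t \<le> x then 1 else 0) * P z t x) \<le> norm (u t) * norm (u x) * exp (l * norm z)"
      by (rule order_trans[OF ind_le P_bound])
    also have "\<dots> = norm (u x) * norm (u t) * exp (l * norm z)" by (simp add: mult_ac)
    finally show "norm ((if t \<le> x then 1 else 0) * P z t x) \<le> norm (u x) * norm (u t) * exp (l * norm z)" .
  qed
  from lborel_pair.Fubini_integral[OF this] show ?thesis by simp
qed

lemma outer_int1: "integrable lborel (\<lambda>x. \<integral>t. (if t \<le> x then 1 else 0) * P z x t \<partial>lborel)"
proof -
  have "integrable (lborel \<Otimes>\<^sub>M lborel) (\<lambda>(x,t). (if t \<le> x then 1 else 0) * P z x t)"
    by (rule prod_int[OF meas_P2 _ exp_nn]) (rule order_trans[OF ind_le P_bound])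
  from lborel_pair.integrable_fst'[OF this] show ?thesis by simp
qed

lemma outer_int2: "integrable lborel (\<lambda>x. \<integral>t. (if x \<le> t then 1 else 0) * P z x t \<partial>lborel)"
proof -
  have "integrable (lborel \<Otimes>\<^sub>M lborel) (\<lambda>(x,t). (if x \<le> t then 1 else 0) * P z x t)"
    by (rule prod_int[OF meas_P3 _ exp_nn]) (rule order_trans[OF ind_le P_bound])
  from lborel_pair.integrable_fst'[OF this] show ?thesis by simp
qed

lemma step_d: "mfun l v z + fstar (mfun l v) z = (\<integral>x. (\<integral>t. P z x t \<partial>lborel) \<partial>lborel)"
proof -
  have "mfun l v z + fstar (mfun l v) z =
     (\<integral>x. (\<integral>t. (if t \<le> x then 1 else 0) * P z x t \<partial>lborel) + (\<integral>t. (if x \<le> t then 1 else 0) * P z x t \<partial>lborel) \<partial>lborel)"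
    unfolding step_a step_b step_c
    by (rule Bochner_Integration.integral_add[OF outer_int1 outer_int2, symmetric])
  also have "\<dots> = (\<integral>x. (\<integral>t. P z x t \<partial>lborel) \<partial>lborel)"
  proof (rule Bochner_Integration.integral_cong[OF refl])
    fix x
    have i1: "integrable lborel (\<lambda>t. (if t \<le> x then 1 else 0) * P z x t)"
      by (rule inner_int[OF meas_P4]) (rule order_trans[OF ind_le P_bound])
    have i2: "integrable lborel (\<lambda>t. (if x \<le> t then 1 else 0) * P z x t)"
      by (rule inner_int[OF meas_P5]) (rule order_trans[OF ind_le P_bound])
    have "(\<integral>t. (if t \<le> x then 1 else 0) * P z x t \<partial>lborel) + (\<integral>t. (if x \<le> t then 1 else 0) * P z x t \<partial>lborel)
        = (\<integral>t. (if t \<le> x then 1 else 0) * P z x t + (if x \<le> t then 1 else 0) * P z x t \<partial>lborel)"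
      by (rule Bochner_Integration.integral_add[OF i1 i2, symmetric])
    also have "\<dots> = (\<integral>t. P z x t \<partial>lborel)"
    proof (rule integral_cong_AE)
      show "AE t in lborel. (if t \<le> x then 1 else 0) * P z x t + (if x \<le> t then 1 else 0) * P z x t = P z x t"
        using AE_lborel_singleton[of x] by eventually_elim auto
    qed measurable
    finally show "(\<integral>t. (if t \<le> x then 1 else 0) * P z x t \<partial>lborel) + (\<integral>t. (if x \<le> t then 1 else 0) * P z x t \<partial>lborel)
        = (\<integral>t. P z x t \<partial>lborel)" .
  qed
  finally show ?thesis .
qed


lemma ul_eq: "indicator {0..l} x *\<^sub>R (v x * c) = u x * c"
  by (simp add: u_def indicator_def)

lemma vc_eq: "vc l v z = (\<integral>t. u t * cfun (- \<i> * z * complex_of_real t) \<partial>lborel)"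
  unfolding vc_def set_lebesgue_integral_def ul_eq ..
lemma vs_eq: "vs l v z = (\<integral>t. u t * sfun (- \<i> * z * complex_of_real t) \<partial>lborel)"
  unfolding vs_def set_lebesgue_integral_def ul_eq ..
lemma vd_eq: "vd l v z = (\<integral>t. u t * dfun (- \<i> * z * complex_of_real t) \<partial>lborel)"
  unfolding vd_def set_lebesgue_integral_def ul_eq ..

lemma cnj_arg: "cnj (- \<i> * cnj z * complex_of_real x) = \<i> * z * complex_of_real x" by simp

lemma fvc_eq: "fstar (vc l v) z = (\<integral>x. cnj (u x) * cfun (\<i> * z * complex_of_real x) \<partial>lborel)"
proof -
  have "fstar (vc l v) z = (\<integral>x. cnj (u x * cfun (- \<i> * cnj z * complex_of_real x)) \<partial>lborel)"
    unfolding fstar_def vc_eq by (rule Bochner_Integration.integral_cnj[symmetric])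
  also have "\<dots> = (\<integral>x. cnj (u x) * cfun (\<i> * z * complex_of_real x) \<partial>lborel)"
    by (simp add: cnj_cfun)
  finally show ?thesis .
qed
lemma fvs_eq: "fstar (vs l v) z = (\<integral>x. cnj (u x) * sfun (\<i> * z * complex_of_real x) \<partial>lborel)"
proof -
  have "fstar (vs l v) z = (\<integral>x. cnj (u x * sfun (- \<i> * cnj z * complex_of_real x)) \<partial>lborel)"
    unfolding fstar_def vs_eq by (rule Bochner_Integration.integral_cnj[symmetric])
  also have "\<dots> = (\<integral>x. cnj (u x) * sfun (\<i> * z * complex_of_real x) \<partial>lborel)"
    by (simp add: cnj_sfun)
  finally show ?thesis .
qed
lemma fvd_eq: "fstar (vd l v) z = (\<integral>x. cnj (u x) * dfun (\<i> * z * complex_of_real x) \<partial>lborel)"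
proof -
  have "fstar (vd l v) z = (\<integral>x. cnj (u x * dfun (- \<i> * cnj z * complex_of_real x)) \<partial>lborel)"
    unfolding fstar_def vd_eq by (rule Bochner_Integration.integral_cnj[symmetric])
  also have "\<dots> = (\<integral>x. cnj (u x) * dfun (\<i> * z * complex_of_real x) \<partial>lborel)"
    by (simp add: cnj_dfun)
  finally show ?thesis .
qed

lemma arg_bound: "t \<in> {0..l} \<Longrightarrow> norm (c * z * complex_of_real t) \<le> l * norm z" if "norm c = 1"
  using that by (auto simp: norm_mult mult_ac intro!: mult_right_mono)

lemma bnd_gen:
  assumes hf: "\<And>w. norm (f w) \<le> exp (norm w)" and c: "norm c = 1" and t: "t \<in> {0..l}"
  shows "norm (f (c * z * complex_of_real t)) \<le> exp (l * norm z)"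
proof -
  have "norm (c * z * complex_of_real t) \<le> l * norm z" by (rule arg_bound[OF c t])
  hence "exp (norm (c * z * complex_of_real t)) \<le> exp (l * norm z)" by simp
  thus ?thesis using hf order_trans by blast
qed

lemma int_c: "integrable lborel (\<lambda>t. u t * cfun (- \<i> * z * complex_of_real t))"
  by (rule intg_u(1)[where C="exp (l * norm z)"]) (measurable, rule bnd_gen[OF norm_cfun], auto)
lemma int_s: "integrable lborel (\<lambda>t. u t * sfun (- \<i> * z * complex_of_real t))"
  by (rule intg_u(1)[where C="exp (l * norm z)"]) (measurable, rule bnd_gen[OF norm_sfun], auto)
lemma int_d: "integrable lborel (\<lambda>t. u t * dfun (- \<i> * z * complex_of_real t))"
  by (rule intg_u(1)[where C="exp (l * norm z)"]) (measurable, rule bnd_gen[OF norm_dfun], auto)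
lemma int_c': "integrable lborel (\<lambda>t. cnj (u t) * cfun (\<i> * z * complex_of_real t))"
  by (rule intg_u(2)[where C="exp (l * norm z)"]) (measurable, rule bnd_gen[OF norm_cfun], auto)
lemma int_s': "integrable lborel (\<lambda>t. cnj (u t) * sfun (\<i> * z * complex_of_real t))"
  by (rule intg_u(2)[where C="exp (l * norm z)"]) (measurable, rule bnd_gen[OF norm_sfun], auto)
lemma int_d': "integrable lborel (\<lambda>t. cnj (u t) * dfun (\<i> * z * complex_of_real t))"
  by (rule intg_u(2)[where C="exp (l * norm z)"]) (measurable, rule bnd_gen[OF norm_dfun], auto)

lemma int3:
  fixes f1 f2 f3 :: "real \<Rightarrow> complex"
  assumes "integrable lborel f1" "integrable lborel f2" "integrable lborel f3"
  shows "(\<integral>x. a * f1 x + b * f2 x + c * f3 x \<partial>lborel) = a * integral\<^sup>L lborel f1 + b * integral\<^sup>L lborel f2 + c * integral\<^sup>L lborel f3"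
proof -
  have i1: "integrable lborel (\<lambda>x. a * f1 x)" "integrable lborel (\<lambda>x. b * f2 x)" "integrable lborel (\<lambda>x. c * f3 x)"
    using assms by auto
  have i2: "integrable lborel (\<lambda>x. a * f1 x + b * f2 x)"
    by (rule Bochner_Integration.integrable_add[OF i1(1,2)])
  have "(\<integral>x. a * f1 x + b * f2 x + c * f3 x \<partial>lborel) = (\<integral>x. a * f1 x + b * f2 x \<partial>lborel) + (\<integral>x. c * f3 x \<partial>lborel)"
    by (rule Bochner_Integration.integral_add[OF i2 i1(3)])
  also have "(\<integral>x. a * f1 x + b * f2 x \<partial>lborel) = (\<integral>x. a * f1 x \<partial>lborel) + (\<integral>x. b * f2 x \<partial>lborel)"
    by (rule Bochner_Integration.integral_add[OF i1(1,2)])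
  finally show ?thesis by simp
qed

lemma int3':
  fixes f1 f2 f3 :: "real \<Rightarrow> complex"
  assumes "integrable lborel f1" "integrable lborel f2" "integrable lborel f3"
  shows "(\<integral>x. f1 x * a + f2 x * b + f3 x * c \<partial>lborel) = integral\<^sup>L lborel f1 * a + integral\<^sup>L lborel f2 * b + integral\<^sup>L lborel f3 * c"
  using int3[OF assms, of a b c] by (simp add: mult.commute)

lemma P_split: "P z x t =
    (cnj (u x) * dfun (\<i> * z * complex_of_real x)) * (u t * cfun (- \<i> * z * complex_of_real t))
  + (cnj (u x) * sfun (\<i> * z * complex_of_real x)) * (u t * sfun (- \<i> * z * complex_of_real t))
  + (cnj (u x) * cfun (\<i> * z * complex_of_real x)) * (u t * dfun (- \<i> * z * complex_of_real t))"
proof -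
  have "\<i> * z * complex_of_real (x - t) = \<i> * z * complex_of_real x + (- \<i> * z * complex_of_real t)"
    by (simp add: algebra_simps)
  hence "P z x t = cnj (u x) * u t * (dfun (\<i> * z * complex_of_real x) * cfun (- \<i> * z * complex_of_real t)
     + sfun (\<i> * z * complex_of_real x) * sfun (- \<i> * z * complex_of_real t)
     + cfun (\<i> * z * complex_of_real x) * dfun (- \<i> * z * complex_of_real t))"
    unfolding P_def by (simp only: addf)
  thus ?thesis by (simp add: algebra_simps)
qed

lemma step_e: "(\<integral>x. (\<integral>t. P z x t \<partial>lborel) \<partial>lborel)
   = vd l v z * fstar (vc l v) z + vs l v z * fstar (vs l v) z + vc l v z * fstar (vd l v) z"
proof -
  have "(\<integral>x. (\<integral>t. P z x t \<partial>lborel) \<partial>lborel) =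
     (\<integral>x. (cnj (u x) * dfun (\<i> * z * complex_of_real x)) * vc l v z
        + (cnj (u x) * sfun (\<i> * z * complex_of_real x)) * vs l v z
        + (cnj (u x) * cfun (\<i> * z * complex_of_real x)) * vd l v z \<partial>lborel)"
  proof (rule Bochner_Integration.integral_cong[OF refl])
    fix x
    show "(\<integral>t. P z x t \<partial>lborel) = (cnj (u x) * dfun (\<i> * z * complex_of_real x)) * vc l v z
        + (cnj (u x) * sfun (\<i> * z * complex_of_real x)) * vs l v z
        + (cnj (u x) * cfun (\<i> * z * complex_of_real x)) * vd l v z"
      unfolding P_split vc_eq vs_eq vd_eq by (rule int3[OF int_c int_s int_d])
  qed
  also have "\<dots> = fstar (vd l v) z * vc l v z + fstar (vs l v) z * vs l v z + fstar (vc l v) z * vd l v z"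
    unfolding fvc_eq fvs_eq fvd_eq by (rule int3'[OF int_d' int_s' int_c'])
  finally show ?thesis by (simp add: mult_ac add_ac)
qed

lemma main: "mfun l v holomorphic_on UNIV \<and> exponential_type (mfun l v) \<and>
         (\<forall>z. mfun l v z + fstar (mfun l v) z =
               vd l v z * fstar (vc l v) z + vs l v z * fstar (vs l v) z
               + vc l v z * fstar (vd l v) z)"
  using m_hol m_exp step_d step_e by simp

end

theorem lemma2p1:
  fixes l :: real and v :: "real \<Rightarrow> complex"
  assumes "0 < l" and "L2_on l v"
  shows "mfun l v holomorphic_on UNIV \<and> exponential_type (mfun l v) \<and>
         (\<forall>z. mfun l v z + fstar (mfun l v) z =
               vd l v z * fstar (vc l v) z + vs l v z * fstar (vs l v) z
               + vc l v z * fstar (vd l v) z)"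
proof -
  interpret mctx l v using assms by unfold_locales
  show ?thesis by (rule main)
qed

end
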